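(* Let $U_1,U_2,\dots$ be i.i.d. almost surely positive random variables distributed as $U$ with tail function $Q(x)=\mathbb{P}(U>x)$, and assume $\mathbb{E}[U^2]<\infty$ and that there exist $\beta\in(0,1/2)$ and $x_0>0$ in the interior of the support of $U$ such that $Q^{1/2-\beta}$ is convex on $[x_0,\infty)$. Let $V_1\le\dots\le V_N$ be the order statistics of $(U_1,\dots,U_N)$; conditionally on them let $(X_{i,j})_{1\le i<j\le N}$ be independent Bernoulli with $\mathbb{P}_V(X_{i,j}=1)=\frac{V_i}{V_i+V_j}$, $X_{j,i}=1-X_{i,j}$, $S_i=\sum_{j\ne i}X_{i,j}$ and $Z_N=\max_{1\le i\le N-1}S_i$. Let $\eta$ be a non-increasing deterministic function on $\mathbb{R}_+$ with $\lim_{+\infty}\eta=0$ such that $\mathbb{P}(B_N)\to1$, where $B_N=\{V_N/\sqrt N\le\eta(N)\}$, and let $C_N=\{\frac14\mathbb{E}[U]\le E_N(V)\le 2\mathbb{E}[U]\}$ with $E_N(V)=\frac1N\sum_{i=1}^{N-1}\frac{V_iV_{N-1}}{V_{N-1}+V_i}$. Then for $N$ large enough, on $B_N\cap C_N$, \[\mathbb{E}_V[Z_N]\le \sum_{i=1}^{N-1}\frac{V_{N-1}}{V_{N-1}+V_i}+\sqrt{8\,\mathbb{E}[U]\frac{N\log N}{V_{N-1}}}.\]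
   Context: $\mathbb{P}_V$ and $\mathbb{E}_V$ denote probability and expectation conditionally on $(V_1,\dots,V_N)$. *)

theory Defs
  imports "HOL-Probability.Probability"
begin

definition real_support :: "real measure \<Rightarrow> real set" where
  "real_support \<mu> = {x. \<forall>e>0. emeasure \<mu> (ball x e) > 0}"

definition order_stat :: "(nat \<Rightarrow> 'a \<Rightarrow> real) \<Rightarrow> nat \<Rightarrow> 'a \<Rightarrow> nat \<Rightarrow> real" where
  "order_stat U N \<omega> k = sort (map (\<lambda>i. U i \<omega>) [1..<N+1]) ! (k - 1)"

(* Conditional law (given V = v) of (X_{i,j})_{1<=i<j<=N}: independent Bernoulli(v_i/(v_i+v_j)) *)
definition tourn_pmf :: "nat \<Rightarrow> (nat \<Rightarrow> real) \<Rightarrow> (nat \<times> nat \<Rightarrow> bool) pmf" where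
  "tourn_pmf N v = Pi_pmf {(i,j). 1 \<le> i \<and> i < j \<and> j \<le> N} False
      (\<lambda>(i,j). bernoulli_pmf (v i / (v i + v j)))"

definition Xwin :: "(nat \<times> nat \<Rightarrow> bool) \<Rightarrow> nat \<Rightarrow> nat \<Rightarrow> bool" where
  "Xwin X i j = (if i < j then X (i,j) else \<not> X (j,i))"

definition score :: "nat \<Rightarrow> (nat \<times> nat \<Rightarrow> bool) \<Rightarrow> nat \<Rightarrow> real" where
  "score N X i = (\<Sum>j\<in>{1..N} - {i}. of_bool (Xwin X i j))"

definition Zmax :: "nat \<Rightarrow> (nat \<times> nat \<Rightarrow> bool) \<Rightarrow> real" where
  "Zmax N X = Max ((\<lambda>i. score N X i) ` {1..N-1})"

(* E_V[Z_N] as a function of the values v = (V_1,...,V_N) *)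
definition cond_exp_Z :: "nat \<Rightarrow> (nat \<Rightarrow> real) \<Rightarrow> real" where
  "cond_exp_Z N v = measure_pmf.expectation (tourn_pmf N v) (Zmax N)"

definition E_N :: "nat \<Rightarrow> (nat \<Rightarrow> real) \<Rightarrow> real" where
  "E_N N v = (1 / real N) * (\<Sum>i=1..N-1. v i * v (N-1) / (v (N-1) + v i))"

end

theory Submission imports Defs begin

lemma finite_pairs: "finite {(i,j). 1 \<le> i \<and> i < j \<and> j \<le> (N::nat)}"
  by (rule finite_subset[of _ "{1..N} \<times> {1..N}"]) auto

lemma finite_tourn: "finite (set_pmf (tourn_pmf N v))"
proof -
  let ?P = "{(i,j). 1 \<le> i \<and> i < j \<and> j \<le> (N::nat)}"
  have "set_pmf (tourn_pmf N v) \<subseteq> {f. \<forall>x. x \<notin> ?P \<longrightarrow> f x = False}"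
    unfolding tourn_pmf_def by (rule set_Pi_pmf_subset[OF finite_pairs])
  also have "\<dots> \<subseteq> PiE_dflt ?P False (\<lambda>_. UNIV)"
    by (simp add: PiE_dflt_def)
  finally have "set_pmf (tourn_pmf N v) \<subseteq> PiE_dflt ?P False (\<lambda>_. UNIV)" .
  moreover have "finite (PiE_dflt ?P False (\<lambda>_. UNIV))"
    by (rule finite_PiE_dflt[OF finite_pairs]) simp
  ultimately show ?thesis by (rule finite_subset)
qed
lemma integrable_tourn: "integrable (measure_pmf (tourn_pmf N v)) (f :: _ \<Rightarrow> real)"
  by (rule integrable_measure_pmf_finite[OF finite_tourn])

lemma prod_pairs_reindex:
  fixes h :: "nat \<times> nat \<Rightarrow> real"
  assumes "i \<in> {1..N}"
    and "\<And>k m. 1 \<le> k \<Longrightarrow> k < m \<Longrightarrow> m \<le> N \<Longrightarrow> k \<noteq> i \<Longrightarrow> m \<noteq> i \<Longrightarrow> h (k,m) = 1"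
  shows "(\<Prod>e\<in>{(i,j). 1 \<le> i \<and> i < j \<and> j \<le> N}. h e) = (\<Prod>j\<in>{1..N}-{i}. h (min i j, max i j))"
proof -
  let ?P = "{(i,j). 1 \<le> i \<and> i < j \<and> j \<le> (N::nat)}"
  let ?Q = "{e\<in>?P. fst e = i \<or> snd e = i}"
  have "(\<Prod>e\<in>?P. h e) = (\<Prod>e\<in>?Q. h e)"
  proof (rule prod.mono_neutral_right[OF finite_pairs])
    show "?Q \<subseteq> ?P" by blast
    show "\<forall>e\<in>?P - ?Q. h e = 1"
    proof
      fix e assume "e \<in> ?P - ?Q"
      then obtain k m where "e = (k,m)" "1 \<le> k" "k < m" "m \<le> N" "k \<noteq> i" "m \<noteq> i" by auto
      thus "h e = 1" using assms(2) by simp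
    qed
  qed
  also have "?Q = (\<lambda>j. (min i j, max i j)) ` ({1..N}-{i})"
  proof (intro equalityI subsetI)
    fix e assume "e \<in> ?Q"
    then obtain k m where e: "e = (k,m)" "1 \<le> k" "k < m" "m \<le> N" "k = i \<or> m = i" by auto
    show "e \<in> (\<lambda>j. (min i j, max i j)) ` ({1..N}-{i})"
    proof (cases "k = i")
      case True thus ?thesis using e by (intro image_eqI[where x=m]) auto
    next
      case False thus ?thesis using e by (intro image_eqI[where x=k]) auto
    qed
  next
    fix e assume "e \<in> (\<lambda>j. (min i j, max i j)) ` ({1..N}-{i})"
    then obtain j where "j \<in> {1..N}" "j \<noteq> i" "e = (min i j, max i j)" by blast
    then show "e \<in> ?Q" using assms(1) by (cases "i < j") (auto simp: min_def max_def)
  qed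
  also have "(\<Prod>e\<in>\<dots>. h e) = (\<Prod>j\<in>{1..N}-{i}. h (min i j, max i j))"
  proof (rule prod.reindex[unfolded comp_def])
    show "inj_on (\<lambda>j. (min i j, max i j)) ({1..N}-{i})"
      by (rule inj_onI) (auto simp: min_def max_def split: if_splits)
  qed
  finally show ?thesis .
qed


lemma bern_int:
  assumes "a > 0" "b > 0"
  shows "measure_pmf.expectation (bernoulli_pmf (a / (a + b))) f = f True * (a/(a+b)) + f False * (b/(a+b))"
proof -
  have "0 \<le> a / (a+b)" "a/(a+b) \<le> 1" using assms by auto
  moreover have "1 - a/(a+b) = b/(a+b)" using assms by (simp add: field_simps)
  ultimately show ?thesis by simp
qed

lemma mgf_score:
  assumes pos: "\<And>k. k \<in> {1..N} \<Longrightarrow> v k > 0" and i: "i \<in> {1..N}"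
  shows "measure_pmf.expectation (tourn_pmf N v) (\<lambda>X. exp (l * score N X i))
       = (\<Prod>j\<in>{1..N}-{i}. v j / (v i + v j) + v i / (v i + v j) * exp l)"
proof -
  define P where "P = {(i,j). 1 \<le> i \<and> i < j \<and> j \<le> (N::nat)}"
  define g where "g = (\<lambda>(e::nat\<times>nat) (x::bool). if fst e = i then exp (l * of_bool x)
        else if snd e = i then exp (l * of_bool (\<not>x)) else 1)"
  define p where "p = (\<lambda>(a,b). bernoulli_pmf (v a / (v a + v b)))"
  have T: "tourn_pmf N v = Pi_pmf P False p" by (simp add: tourn_pmf_def P_def p_def)
  have 1: "exp (l * score N X i) = (\<Prod>e\<in>P. g e (X e))" for X
  proof -
    have "(\<Prod>e\<in>P. g e (X e)) = (\<Prod>j\<in>{1..N}-{i}. g (min i j, max i j) (X (min i j, max i j)))"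
      unfolding P_def by (rule prod_pairs_reindex[OF i]) (auto simp: g_def)
    also have "\<dots> = (\<Prod>j\<in>{1..N}-{i}. exp (l * of_bool (Xwin X i j)))"
      by (rule prod.cong) (auto simp: g_def Xwin_def min_def max_def)
    also have "\<dots> = exp (l * score N X i)"
      unfolding score_def sum_distrib_left by (rule exp_sum[symmetric]) simp
    finally show ?thesis by simp
  qed
  have "measure_pmf.expectation (tourn_pmf N v) (\<lambda>X. exp (l * score N X i))
      = measure_pmf.expectation (Pi_pmf P False p) (\<lambda>X. \<Prod>e\<in>P. g e (X e))"
    using 1 T by simp
  also have "\<dots> = (\<Prod>e\<in>P. measure_pmf.expectation (p e) (g e))"
  proof (rule expectation_prod_Pi_pmf)
    show "finite P" unfolding P_def by (rule finite_pairs)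
    show "integrable (measure_pmf (p e)) (g e)" for e
      by (rule integrable_measure_pmf_finite) simp
    show "0 \<le> g e y" for e y by (simp add: g_def)
  qed
  also have "\<dots> = (\<Prod>j\<in>{1..N}-{i}. measure_pmf.expectation (p (min i j, max i j)) (g (min i j, max i j)))"
    unfolding P_def by (rule prod_pairs_reindex[OF i]) (auto simp: g_def)
  also have "\<dots> = (\<Prod>j\<in>{1..N}-{i}. v j / (v i + v j) + v i / (v i + v j) * exp l)"
  proof (rule prod.cong)
    fix j assume j: "j \<in> {1..N}-{i}"
    have vi: "v i > 0" using pos i by auto
    have vj: "v j > 0" using pos j by auto
    show "measure_pmf.expectation (p (min i j, max i j)) (g (min i j, max i j))
          = v j / (v i + v j) + v i / (v i + v j) * exp l"
    proof (cases "i < j")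
      case True
      then show ?thesis using vi vj by (simp add: p_def g_def min_def max_def bern_int, simp add: field_simps)
    next
      case False
      then have "j < i" using j by auto
      then show ?thesis using vi vj by (simp add: p_def g_def min_def max_def bern_int, simp add: field_simps)
    qed
  qed simp
  finally show ?thesis .
qed


lemma exp_neg_bound:
  fixes x :: real assumes x: "0 \<le> x"
  shows "x - 1 + exp (-x) \<le> x\<^sup>2 / 2"
proof -
  have e: "1 + x + x\<^sup>2 / 2 \<le> exp x" by (rule exp_lower_Taylor_quadratic[OF x])
  have d: "0 < 1 + x + x\<^sup>2 / 2" using x by (simp add: add_pos_nonneg)
  have prod: "(1 - x + x\<^sup>2/2) * (1 + x + x\<^sup>2/2) = 1 + x*x*x*x/4"
    by (simp add: power2_eq_square algebra_simps)
  have "0 \<le> x*x*x*x" using x by simp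
  hence "1 \<le> (1 - x + x\<^sup>2/2) * (1 + x + x\<^sup>2/2)" using prod by linarith
  hence "1 / (1 + x + x\<^sup>2/2) \<le> 1 - x + x\<^sup>2/2" using d by (simp add: divide_le_eq)
  moreover have "exp (-x) \<le> 1 / (1 + x + x\<^sup>2/2)"
    using e d by (simp add: exp_minus inverse_eq_divide frac_le)
  ultimately show ?thesis by linarith
qed

lemma ln2_half: "1/2 \<le> ln (2::real)"
proof -
  have "exp (1/2::real) * exp (1/2) = exp 1" by (simp add: exp_add[symmetric])
  also have "\<dots> \<le> 3" by (rule exp_le)
  finally have "exp (1/2::real) * exp (1/2) < 2 * 2" by simp
  hence "exp (1/2::real) < 2"
    by (metis mult_mono not_le exp_ge_zero zero_le_numeral)
  thus ?thesis by (subst ln_ge_iff) auto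
qed

lemma ell_bound:
  fixes v :: "nat \<Rightarrow> real"
  assumes pos: "\<And>k. k \<in> {1..N} \<Longrightarrow> v k > 0"
    and mono: "\<And>i j. 1 \<le> i \<Longrightarrow> i \<le> j \<Longrightarrow> j \<le> N \<Longrightarrow> v i \<le> v j"
    and i: "i \<in> {1..N-1}"
  shows "(\<Sum>j=1..N-1. v j / (v (N-1) + v j)) - 1/2 \<le> (\<Sum>j\<in>{1..N}-{i}. v j / (v i + v j))"
proof -
  let ?a = "v (N-1)"
  have vi: "0 < v i" "v i \<le> ?a" using pos mono i by auto
  have "(\<Sum>j=1..N-1. v j / (?a + v j)) = (\<Sum>j\<in>{1..N-1}-{i}. v j / (?a + v j)) + v i / (?a + v i)"
    using i by (simp add: sum_diff1)
  also have "v i / (?a + v i) \<le> 1/2" using vi by (simp add: divide_le_eq)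
  also have "(\<Sum>j\<in>{1..N-1}-{i}. v j / (?a + v j)) \<le> (\<Sum>j\<in>{1..N}-{i}. v j / (?a + v j))"
  proof (rule sum_mono2)
    fix j assume "j \<in> {1..N} - {i} - ({1..N-1} - {i})"
    hence "0 < v j" using pos by auto
    moreover have "0 < ?a" using vi by linarith
    ultimately show "0 \<le> v j / (?a + v j)" by simp
  qed auto
  also have "\<dots> \<le> (\<Sum>j\<in>{1..N}-{i}. v j / (v i + v j))"
  proof (rule sum_mono)
    fix j assume j: "j \<in> {1..N}-{i}"
    have "0 < v j" using pos j by auto
    thus "v j / (?a + v j) \<le> v j / (v i + v j)"
      using vi by (intro divide_left_mono) auto
  qed
  finally show ?thesis by simp
qed


lemma factor_bound:
  fixes a b l :: real assumes "a > 0" "b > 0" "l \<ge> 0"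
  shows "b / (a + b) + a / (a + b) * exp l \<le> exp (l - b / (a + b) * (1 - exp (-l)))"
proof -
  let ?r = "b / (a + b)"
  have r: "a / (a + b) = 1 - ?r" using assms by (simp add: field_simps)
  have "?r + a / (a + b) * exp l = exp l * (1 - ?r * (1 - exp (-l)))"
  proof -
    have E: "exp l > 0" by simp
    have alg: "\<And>E r x::real. E * (1 - r * (1 - x)) = E - r * E + r * (E * x)"
      by (simp add: algebra_simps)
    have "exp l * (1 - ?r * (1 - exp (-l))) = exp l - ?r * exp l + ?r * (exp l * exp (-l))"
      by (rule alg)
    also have "exp l * exp (-l) = 1" by (simp add: exp_minus)
    finally have "exp l * (1 - ?r * (1 - exp (-l))) = exp l - ?r * exp l + ?r" by simp
    thus ?thesis unfolding r by (simp add: algebra_simps)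
  qed
  also have "1 - ?r * (1 - exp (-l)) \<le> exp (- (?r * (1 - exp (-l))))"
    using exp_ge_add_one_self[of "- (?r * (1 - exp (-l)))"] by simp
  hence "exp l * (1 - ?r * (1 - exp (-l))) \<le> exp l * exp (- (?r * (1 - exp (-l))))"
    by (intro mult_left_mono) auto
  also have "\<dots> = exp (l - ?r * (1 - exp (-l)))" by (simp add: exp_diff exp_minus field_simps)
  finally show ?thesis .
qed

lemma mgf_bound:
  fixes v :: "nat \<Rightarrow> real"
  assumes pos: "\<And>k. k \<in> {1..N} \<Longrightarrow> v k > 0"
    and mono: "\<And>i j. 1 \<le> i \<Longrightarrow> i \<le> j \<Longrightarrow> j \<le> N \<Longrightarrow> v i \<le> v j"
    and i: "i \<in> {1..N-1}" and l: "l \<ge> 0"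
  shows "measure_pmf.expectation (tourn_pmf N v) (\<lambda>X. exp (l * score N X i))
     \<le> exp (l * (real N - 1) - (1 - exp (-l)) * ((\<Sum>j=1..N-1. v j / (v (N-1) + v j)) - 1/2))"
proof -
  let ?t = "1 - exp (-l)"
  let ?A = "(\<Sum>j=1..N-1. v j / (v (N-1) + v j))"
  have iN: "i \<in> {1..N}" using i by auto
  have vi: "v i > 0" using pos iN by auto
  have t: "0 \<le> ?t" using l by simp
  have "measure_pmf.expectation (tourn_pmf N v) (\<lambda>X. exp (l * score N X i))
      = (\<Prod>j\<in>{1..N}-{i}. v j / (v i + v j) + v i / (v i + v j) * exp l)"
    by (rule mgf_score[OF pos iN])
  also have "\<dots> \<le> (\<Prod>j\<in>{1..N}-{i}. exp (l - v j / (v i + v j) * ?t))"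
  proof (rule prod_mono)
    fix j assume j: "j \<in> {1..N}-{i}"
    have vj: "v j > 0" using pos j by auto
    show "0 \<le> v j / (v i + v j) + v i / (v i + v j) * exp l \<and>
          v j / (v i + v j) + v i / (v i + v j) * exp l \<le> exp (l - v j / (v i + v j) * ?t)"
      using factor_bound[OF vi vj l] vi vj by (simp add: add_nonneg_nonneg)
  qed
  also have "\<dots> = exp (\<Sum>j\<in>{1..N}-{i}. l - v j / (v i + v j) * ?t)"
    by (rule exp_sum[symmetric]) simp
  also have "(\<Sum>j\<in>{1..N}-{i}. l - v j / (v i + v j) * ?t)
      = l * (real N - 1) - ?t * (\<Sum>j\<in>{1..N}-{i}. v j / (v i + v j))"
    using iN by (simp add: sum_subtractf sum_distrib_left mult.commute of_nat_diff)
  also have "\<dots> \<le> l * (real N - 1) - ?t * (?A - 1/2)"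
    using mult_left_mono[OF ell_bound[where v=v and N=N, OF pos mono i] t] by linarith
  finally show ?thesis by simp
qed


lemma det_bound:
  fixes v :: "nat \<Rightarrow> real"
  assumes N: "N \<ge> 2"
    and pos: "\<And>k. k \<in> {1..N} \<Longrightarrow> v k > 0"
    and mono: "\<And>i j. 1 \<le> i \<Longrightarrow> i \<le> j \<Longrightarrow> j \<le> N \<Longrightarrow> v i \<le> v j"
    and EN: "E_N N v \<le> 2 * EU"
  shows "cond_exp_Z N v \<le> (\<Sum>i=1..N-1. v (N-1) / (v (N-1) + v i))
           + sqrt (8 * EU * (real N * ln (real N)) / v (N-1))"
proof -
  define a where "a = v (N-1)"
  define A where "A = (\<Sum>j=1..N-1. v j / (a + v j))"
  define M0 where "M0 = (\<Sum>i=1..N-1. a / (a + v i))"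
  have a: "a > 0" unfolding a_def using pos N by auto
  have posj: "\<And>j. j \<in> {1..N-1} \<Longrightarrow> v j > 0" using pos by auto
  have AM: "M0 + A = real N - 1"
  proof -
    have "M0 + A = (\<Sum>i=1..N-1. a / (a + v i) + v i / (a + v i))"
      unfolding M0_def A_def by (simp add: sum.distrib)
    also have "\<dots> = (\<Sum>i=1..N-1. 1)"
    proof (rule sum.cong)
      fix i assume "i \<in> {1..N-1}"
      hence "v i > 0" by (rule posj)
      hence "a + v i > 0" using a by simp
      thus "a / (a + v i) + v i / (a + v i) = 1" by (simp add: add_divide_distrib[symmetric])
    qed simp
    also have "\<dots> = real N - 1" using N by (simp add: of_nat_diff)
    finally show ?thesis .
  qed
  have Apos: "A > 0" unfolding A_def
    by (rule sum_pos) (use N a posj in \<open>auto intro!: divide_pos_pos add_pos_pos\<close>)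
  have AEU: "A * a = real N * E_N N v"
  proof -
    have "real N * E_N N v = (\<Sum>i=1..N-1. v i * a / (a + v i))"
      using N by (simp add: E_N_def a_def)
    also have "\<dots> = A * a" unfolding A_def sum_distrib_right by (rule sum.cong) auto
    finally show ?thesis by simp
  qed
  have lnN: "ln (real N) \<ge> 1/2"
  proof -
    have "ln (2::real) \<le> ln (real N)" using N by simp
    thus ?thesis using ln2_half by linarith
  qed
  define c where "c = ln (real N) + 1/2"
  have c: "c > 0" "c \<le> 2 * ln (real N)" using lnN by (auto simp: c_def)
  define l where "l = sqrt (2 * c / A)"
  have l: "l > 0" unfolding l_def using c Apos by simp
  have l2: "l\<^sup>2 = 2 * c / A" unfolding l_def using c Apos by simp
  define K where "K = l * M0 + A * l\<^sup>2 / 2 + 1/2"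
  have key: "measure_pmf.expectation (tourn_pmf N v) (\<lambda>X. exp (l * score N X i)) \<le> exp K"
    if i: "i \<in> {1..N-1}" for i
  proof -
    let ?t = "1 - exp (-l)"
    have "measure_pmf.expectation (tourn_pmf N v) (\<lambda>X. exp (l * score N X i))
        \<le> exp (l * (real N - 1) - ?t * (A - 1/2))"
      using mgf_bound[where v=v and N=N, OF pos mono i less_imp_le[OF l]]
      unfolding A_def a_def .
    also have "l * (real N - 1) - ?t * (A - 1/2) \<le> K"
    proof -
      have "l * (real N - 1) - ?t * (A - 1/2) = l * M0 + A * (l - 1 + exp (-l)) + ?t / 2"
        using AM by (simp add: algebra_simps flip: AM)
      also have "A * (l - 1 + exp (-l)) \<le> A * (l\<^sup>2 / 2)"
        using exp_neg_bound[of l] l Apos by (intro mult_left_mono) auto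
      also have "?t / 2 \<le> 1/2" by simp
      finally show ?thesis unfolding K_def by simp
    qed
    finally show ?thesis by simp
  qed
  have fin: "finite {1..N-1}" by simp
  have ne: "{1..N-1} \<noteq> {}" using N by auto
  have maxb: "exp (l * Zmax N X) \<le> (\<Sum>i\<in>{1..N-1}. exp (l * score N X i))" for X
  proof -
    have "Zmax N X \<in> (\<lambda>i. score N X i) ` {1..N-1}"
      unfolding Zmax_def by (rule Max_in) (use ne in auto)
    then obtain i where i: "i \<in> {1..N-1}" "Zmax N X = score N X i" by blast
    show ?thesis unfolding i(2) by (rule member_le_sum[OF i(1)]) auto
  qed
  have jen: "exp (measure_pmf.expectation (tourn_pmf N v) (\<lambda>X. l * Zmax N X))
       \<le> measure_pmf.expectation (tourn_pmf N v) (\<lambda>X. exp (l * Zmax N X))"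
    by (rule measure_pmf.jensens_inequality[where I=UNIV])
       (auto intro: integrable_tourn exp_convex)
  have "measure_pmf.expectation (tourn_pmf N v) (\<lambda>X. exp (l * Zmax N X))
      \<le> measure_pmf.expectation (tourn_pmf N v) (\<lambda>X. \<Sum>i\<in>{1..N-1}. exp (l * score N X i))"
    by (rule integral_mono[OF integrable_tourn integrable_tourn maxb])
  also have "\<dots> = (\<Sum>i\<in>{1..N-1}. measure_pmf.expectation (tourn_pmf N v) (\<lambda>X. exp (l * score N X i)))"
    by (rule Bochner_Integration.integral_sum) (auto intro: integrable_tourn)
  also have "\<dots> \<le> (\<Sum>i\<in>{1..N-1}. exp K)"
    by (rule sum_mono) (rule key)
  also have "\<dots> \<le> real N * exp K" using N by (simp add: of_nat_diff)
  also have "\<dots> = exp (ln (real N) + K)" using N by (simp add: exp_add)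
  finally have up: "measure_pmf.expectation (tourn_pmf N v) (\<lambda>X. exp (l * Zmax N X)) \<le> exp (ln (real N) + K)" .
  have "exp (l * cond_exp_Z N v) = exp (measure_pmf.expectation (tourn_pmf N v) (\<lambda>X. l * Zmax N X))"
    by (simp add: cond_exp_Z_def)
  have ce: "cond_exp_Z N v = measure_pmf.expectation (tourn_pmf N v) (Zmax N)" by (simp add: cond_exp_Z_def)
  have "exp (l * cond_exp_Z N v) \<le> exp (ln (real N) + K)" using order.trans[OF jen up] by (simp add: ce)
  hence "l * cond_exp_Z N v \<le> ln (real N) + K" by simp
  hence "l * cond_exp_Z N v \<le> l * M0 + c + A * l\<^sup>2 / 2" unfolding K_def c_def by simp
  hence Z1: "cond_exp_Z N v \<le> M0 + c / l + A * l / 2"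
    using l by (simp add: field_simps power2_eq_square)
  have Z2: "A * l / 2 = c / l"
    using l l2 Apos by (simp add: field_simps power2_eq_square)
  have Z3: "c / l + c / l \<le> sqrt (8 * EU * (real N * ln (real N)) / a)"
  proof (rule real_le_rsqrt)
    have "(c / l + c / l)\<^sup>2 = 4 * c\<^sup>2 / l\<^sup>2" using l by (simp add: field_simps power2_eq_square)
    also have "\<dots> = 4 * c\<^sup>2 / (2 * c / A)" by (simp only: l2)
    also have "\<dots> = 2 * c * A" using c Apos by (simp add: field_simps power2_eq_square)
    also have "\<dots> \<le> 4 * ln (real N) * A" using c Apos by (simp add: mult_right_mono)
    also have "A \<le> 2 * EU * real N / a"
      using AEU EN a N by (simp add: field_simps)
    hence "4 * ln (real N) * A \<le> 4 * ln (real N) * (2 * EU * real N / a)"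
      using lnN by (intro mult_left_mono) auto
    also have "\<dots> = 8 * EU * (real N * ln (real N)) / a" by simp
    finally show "(c / l + c / l)\<^sup>2 \<le> 8 * EU * (real N * ln (real N)) / a" .
  qed
  have "cond_exp_Z N v \<le> M0 + sqrt (8 * EU * (real N * ln (real N)) / a)"
    using Z1 Z2 Z3 by linarith
  thus ?thesis unfolding M0_def a_def by simp
qed

theorem lemma5:
  fixes M :: "'a measure" and U :: "nat \<Rightarrow> 'a \<Rightarrow> real" and \<mu> :: "real measure"
    and \<beta> x0 :: real and \<eta> :: "real \<Rightarrow> real"
  assumes "prob_space M"
    and "prob_space.indep_vars M (\<lambda>_. borel) U {1..}"
    and "\<And>i. i \<ge> 1 \<Longrightarrow> distr M borel (U i) = \<mu>"
    and "AE x in \<mu>. x > 0"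
    and "integrable \<mu> (\<lambda>x. x ^ 2)"
    and "0 < \<beta>" and "\<beta> < 1/2" and "x0 > 0"
    and "x0 \<in> interior (real_support \<mu>)"
    and "convex_on {x0..} (\<lambda>x. measure \<mu> {x<..} powr (1/2 - \<beta>))"
    and "\<And>x y. 0 \<le> x \<Longrightarrow> x \<le> y \<Longrightarrow> \<eta> y \<le> \<eta> x"
    and "(\<eta> \<longlongrightarrow> 0) at_top"
    and "(\<lambda>N. measure M {\<omega>\<in>space M. order_stat U N \<omega> N / sqrt (real N) \<le> \<eta> (real N)})
           \<longlonglongrightarrow> 1"
  shows "\<exists>N0. \<forall>N\<ge>N0. AE \<omega> in M.
           (let V = order_stat U N \<omega>; EU = (\<integral>x. x \<partial>\<mu>) in
             (V N / sqrt (real N) \<le> \<eta> (real N)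
              \<and> EU / 4 \<le> E_N N V \<and> E_N N V \<le> 2 * EU)
             \<longrightarrow> cond_exp_Z N V
                 \<le> (\<Sum>i=1..N-1. V (N-1) / (V (N-1) + V i))
                   + sqrt (8 * EU * (real N * ln (real N)) / V (N-1)))"
proof -
  interpret P: prob_space M by (rule assms(1))
  have rv: "U k \<in> borel_measurable M" if "k \<ge> 1" for k
    using assms(2) that unfolding P.indep_vars_def2 by auto
  have AEk: "AE \<omega> in M. U k \<omega> > 0" if k: "k \<ge> 1" for k
  proof -
    have "AE x in distr M borel (U k). x > 0" unfolding assms(3)[OF k] by (rule assms(4))
    thus ?thesis by (subst (asm) AE_distr_iff[OF rv[OF k]]) auto
  qed
  show ?thesis
  proof (intro exI allI impI)
    fix N :: nat assume N: "N \<ge> 2"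
    have "AE \<omega> in M. \<forall>k\<in>{1..N}. U k \<omega> > 0"
      by (rule AE_finite_allI) (auto intro: AEk)
    thus "AE \<omega> in M.
           (let V = order_stat U N \<omega>; EU = (\<integral>x. x \<partial>\<mu>) in
             (V N / sqrt (real N) \<le> \<eta> (real N)
              \<and> EU / 4 \<le> E_N N V \<and> E_N N V \<le> 2 * EU)
             \<longrightarrow> cond_exp_Z N V
                 \<le> (\<Sum>i=1..N-1. V (N-1) / (V (N-1) + V i))
                   + sqrt (8 * EU * (real N * ln (real N)) / V (N-1)))"
    proof (rule AE_mp, intro AE_I2 impI)
      fix \<omega> assume upos: "\<forall>k\<in>{1..N}. U k \<omega> > 0"
      define xs where "xs = map (\<lambda>i. U i \<omega>) [1..<N+1]"
      have len: "length (sort xs) = N" by (simp add: xs_def)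
      have os: "order_stat U N \<omega> k = sort xs ! (k - 1)" for k
        by (simp add: order_stat_def xs_def)
      have pos: "order_stat U N \<omega> k > 0" if "k \<in> {1..N}" for k
      proof -
        have "sort xs ! (k - 1) \<in> set (sort xs)" using that len by (intro nth_mem) auto
        hence "sort xs ! (k - 1) \<in> set xs" by simp
        then show ?thesis using upos unfolding os xs_def by auto
      qed
      have mono: "order_stat U N \<omega> i \<le> order_stat U N \<omega> j"
        if "1 \<le> i" "i \<le> j" "j \<le> N" for i j
        unfolding os using that len by (intro sorted_nth_mono) auto
      show "let V = order_stat U N \<omega>; EU = (\<integral>x. x \<partial>\<mu>) in
             (V N / sqrt (real N) \<le> \<eta> (real N)
              \<and> EU / 4 \<le> E_N N V \<and> E_N N V \<le> 2 * EU)
             \<longrightarrow> cond_exp_Z N V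
                 \<le> (\<Sum>i=1..N-1. V (N-1) / (V (N-1) + V i))
                   + sqrt (8 * EU * (real N * ln (real N)) / V (N-1))"
        unfolding Let_def using det_bound[where v="order_stat U N \<omega>" and N=N and EU="\<integral>x. x \<partial>\<mu>", OF N pos mono] by blast
    qed
  qed
qed

end
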